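(* Let $a_c>b_c>0$, $k_e>0$, $a_e^2=a_c^2+k_e$, $b_e^2=b_c^2+k_e$, let $c$ be the ellipse $x^2/a_c^2+y^2/b_c^2=1$, $e$ the confocal ellipse $x^2/a_e^2+y^2/b_e^2=1$, and $O$ the origin. Let $P_1P_2$ be a chord of $e$ whose line $\ell=[P_1,P_2]$ is tangent to $c$ at the point $Q_1$, and let $R_1$ be the pole of $\ell$ with respect to $e$. Then the signed distances of $O$ and of $R_1$ from the line $\ell$ (measured with respect to one and the same unit normal of $\ell$) have product $-k_e$. Moreover, the lines $[P_1,P_2]$ and $[Q_1,R_1]$ are orthogonal. *)

theory Defs
  imports "HOL-Analysis.Analysis"
begin

definition on_ellipse :: "real \<Rightarrow> real \<Rightarrow> real \<times> real \<Rightarrow> bool" where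
  "on_ellipse a b p \<longleftrightarrow> (fst p)\<^sup>2 / a\<^sup>2 + (snd p)\<^sup>2 / b\<^sup>2 = 1"

definition line_through :: "real \<times> real \<Rightarrow> real \<times> real \<Rightarrow> (real \<times> real) set" where
  "line_through P1 P2 = {P1 + t *\<^sub>R (P2 - P1) | t. True}"

text \<open>Polar line of a point R with respect to the ellipse x^2/a^2+y^2/b^2=1.
  For R on the ellipse this is the tangent line at R.\<close>
definition polar_line :: "real \<Rightarrow> real \<Rightarrow> real \<times> real \<Rightarrow> (real \<times> real) set" where
  "polar_line a b R = {X. fst X * fst R / a\<^sup>2 + snd X * snd R / b\<^sup>2 = 1}"

definition tangent_at :: "real \<Rightarrow> real \<Rightarrow> (real \<times> real) set \<Rightarrow> real \<times> real \<Rightarrow> bool" where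
  "tangent_at a b L Q \<longleftrightarrow> on_ellipse a b Q \<and> L = polar_line a b Q"

definition is_pole :: "real \<Rightarrow> real \<Rightarrow> (real \<times> real) set \<Rightarrow> real \<times> real \<Rightarrow> bool" where
  "is_pole a b L R \<longleftrightarrow> polar_line a b R = L"

end

theory Submission
  imports Defs
begin

lemma coef_lemma:
  fixes a1 b1 a2 b2 d :: real
  assumes h: "\<And>x y. x*a1 + y*b1 = 1 \<Longrightarrow> x*a2 + y*b2 = d" and s: "a1\<^sup>2+b1\<^sup>2 \<noteq> 0"
  shows "a2 = d*a1 \<and> b2 = d*b1"
proof -
  define s where "s = a1*a1+b1*b1"
  have sp: "s \<noteq> 0" using assms s_def by (simp add: power2_eq_square)
  have "(a1/s)*a1 + (b1/s)*b1 = (a1*a1+b1*b1)/s" by (simp add: add_divide_distrib)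
  hence g1: "(a1/s)*a1 + (b1/s)*b1 = 1" using sp unfolding s_def by simp
  have e1: "(a1/s)*a2 + (b1/s)*b2 = d" by (rule h) (rule g1)
  have e2: "(a1/s - b1)*a2 + (b1/s + a1)*b2 = d"
    by (rule h) (use g1 in \<open>simp add: algebra_simps\<close>)
  have f1: "a1*a2 + b1*b2 = d * s" using e1 sp by (simp add: field_simps)
  have f2: "a1*b2 - b1*a2 = 0" using e1 e2 by (simp add: algebra_simps)
  have A: "a2 * s = d*a1 * s"
  proof -
    have "a2 * s = a1*(a1*a2 + b1*b2) - b1*(a1*b2 - b1*a2)" unfolding s_def by algebra
    also have "... = a1*(d * s)" using f1 f2 by simp
    finally show ?thesis by (simp add: mult.commute)
  qed
  have B: "b2 * s = d*b1 * s"
  proof -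
    have "b2 * s = b1*(a1*a2 + b1*b2) + a1*(a1*b2 - b1*a2)" unfolding s_def by algebra
    also have "... = b1*(d * s)" using f1 f2 by simp
    finally show ?thesis by (simp add: mult.commute)
  qed
  from A B show ?thesis using sp by simp
qed

theorem lemma2p4:
  fixes a_c b_c k_e a_e b_e :: real and P1 P2 Q1 R1 :: "real \<times> real"
  assumes "a_c > b_c" and "b_c > 0" and "k_e > 0"
    and "a_e > 0" and "b_e > 0"
    and "a_e\<^sup>2 = a_c\<^sup>2 + k_e" and "b_e\<^sup>2 = b_c\<^sup>2 + k_e"
    and "P1 \<noteq> P2" and "on_ellipse a_e b_e P1" and "on_ellipse a_e b_e P2"
    and "tangent_at a_c b_c (line_through P1 P2) Q1"
    and "is_pole a_e b_e (line_through P1 P2) R1"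
  shows "(\<forall>n d. norm n = 1 \<and> line_through P1 P2 = {X. n \<bullet> X = d} \<longrightarrow>
            (n \<bullet> (0, 0) - d) * (n \<bullet> R1 - d) = - k_e)
       \<and> Q1 \<noteq> R1 \<and> (P2 - P1) \<bullet> (R1 - Q1) = 0"
proof -
  obtain q1 q2 where Q: "Q1 = (q1, q2)" by fastforce
  obtain r1 r2 where R: "R1 = (r1, r2)" by fastforce
  define L where "L = line_through P1 P2"
  define \<alpha> where "\<alpha> = q1 / a_c\<^sup>2"
  define \<beta> where "\<beta> = q2 / b_c\<^sup>2"
  have ac: "a_c > 0" using assms by simp
  have onc: "q1\<^sup>2 / a_c\<^sup>2 + q2\<^sup>2 / b_c\<^sup>2 = 1" using assms(11) Q unfolding tangent_at_def on_ellipse_def by simp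
  have LQ: "L = {X. fst X * \<alpha> + snd X * \<beta> = 1}" using assms(11) Q
    unfolding tangent_at_def polar_line_def L_def \<alpha>_def \<beta>_def by auto
  have LR: "L = {X. fst X * (r1 / a_e\<^sup>2) + snd X * (r2 / b_e\<^sup>2) = 1}" using assms(12) R
    unfolding is_pole_def polar_line_def L_def by auto
  have nz: "\<alpha>\<^sup>2 + \<beta>\<^sup>2 \<noteq> 0"
  proof
    assume "\<alpha>\<^sup>2 + \<beta>\<^sup>2 = 0"
    hence "\<alpha> = 0" "\<beta> = 0" by (auto simp: add_nonneg_eq_0_iff)
    hence "q1 = 0" "q2 = 0" using ac assms(2) unfolding \<alpha>_def \<beta>_def by auto
    thus False using onc by simp
  qed
  have "r1 / a_e\<^sup>2 = 1*\<alpha> \<and> r2 / b_e\<^sup>2 = 1*\<beta>"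
  proof (rule coef_lemma[OF _ nz])
    fix x y assume "x * \<alpha> + y * \<beta> = 1"
    hence "(x,y) \<in> L" using LQ by simp
    thus "x * (r1 / a_e\<^sup>2) + y * (r2 / b_e\<^sup>2) = 1" using LR by simp
  qed
  hence r1: "r1 = \<alpha> * a_e\<^sup>2" and r2: "r2 = \<beta> * b_e\<^sup>2" using assms(4,5) by (auto simp: field_simps)
  have key: "\<alpha> * r1 + \<beta> * r2 - 1 = k_e * (\<alpha>\<^sup>2 + \<beta>\<^sup>2)"
  proof -
    have "\<alpha> * r1 + \<beta> * r2 - 1 = \<alpha> * r1 + \<beta> * r2 - (q1\<^sup>2 / a_c\<^sup>2 + q2\<^sup>2 / b_c\<^sup>2)" using onc by simp
    also have "... = k_e * (\<alpha>\<^sup>2 + \<beta>\<^sup>2)"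
      unfolding r1 r2 assms(6,7) \<alpha>_def \<beta>_def using ac assms(2)
      by (simp add: field_simps power2_eq_square)
    finally show ?thesis .
  qed
  have part1: "\<forall>n d. norm n = 1 \<and> line_through P1 P2 = {X. n \<bullet> X = d} \<longrightarrow>
            (n \<bullet> (0, 0) - d) * (n \<bullet> R1 - d) = - k_e"
  proof (intro allI impI)
    fix n :: "real \<times> real" and d assume h: "norm n = 1 \<and> line_through P1 P2 = {X. n \<bullet> X = d}"
    obtain n1 n2 where N: "n = (n1, n2)" by fastforce
    have "n1 = d*\<alpha> \<and> n2 = d*\<beta>"
    proof (rule coef_lemma[OF _ nz])
      fix x y assume "x * \<alpha> + y * \<beta> = 1"
      hence "(x,y) \<in> L" using LQ by simp
      thus "x * n1 + y * n2 = d" using h N L_def by (simp add: mult.commute)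
    qed
    hence n1: "n1 = d*\<alpha>" and n2: "n2 = d*\<beta>" by auto
    have "n1\<^sup>2 + n2\<^sup>2 = 1" using h N by (simp add: norm_Pair)
    hence nn: "d\<^sup>2 * (\<alpha>\<^sup>2 + \<beta>\<^sup>2) = 1" unfolding n1 n2 by (simp add: power_mult_distrib algebra_simps)
    have "(n \<bullet> (0, 0) - d) * (n \<bullet> R1 - d) = - (d\<^sup>2 * (\<alpha> * r1 + \<beta> * r2 - 1))"
      unfolding N R n1 n2 by (simp add: algebra_simps power2_eq_square)
    also have "... = - k_e * (d\<^sup>2 * (\<alpha>\<^sup>2 + \<beta>\<^sup>2))" unfolding key by simp
    finally show "(n \<bullet> (0, 0) - d) * (n \<bullet> R1 - d) = - k_e" using nn by simp
  qed
  have RQ: "R1 - Q1 = (k_e * \<alpha>, k_e * \<beta>)"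
    unfolding R Q r1 r2 assms(6,7) \<alpha>_def \<beta>_def using ac assms(2)
    by (simp add: field_simps)
  have part2: "Q1 \<noteq> R1"
  proof
    assume "Q1 = R1"
    hence "k_e * \<alpha> = 0" "k_e * \<beta> = 0" using RQ by (auto simp: zero_prod_def)
    hence "\<alpha> = 0" "\<beta> = 0" using assms(3) by auto
    thus False using nz by simp
  qed
  have "P1 \<in> L" unfolding L_def line_through_def by (auto intro: exI[of _ 0])
  moreover have "P2 \<in> L" unfolding L_def line_through_def by (auto intro!: exI[of _ 1])
  ultimately have "fst P1 * \<alpha> + snd P1 * \<beta> = 1" "fst P2 * \<alpha> + snd P2 * \<beta> = 1" using LQ by auto
  hence part3: "(P2 - P1) \<bullet> (R1 - Q1) = 0" unfolding RQ
  proof (cases P1, cases P2)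
    fix a b aa ba assume "fst P1 * \<alpha> + snd P1 * \<beta> = 1" "fst P2 * \<alpha> + snd P2 * \<beta> = 1"
      "P1 = (a, b)" "P2 = (aa, ba)"
    moreover have "(aa - a) * (k_e * \<alpha>) + (ba - b) * (k_e * \<beta>)
      = k_e * ((aa * \<alpha> + ba * \<beta>) - (a * \<alpha> + b * \<beta>))" by algebra
    ultimately show "(P2 - P1) \<bullet> (k_e * \<alpha>, k_e * \<beta>) = 0" by simp
  qed
  show ?thesis using part1 part2 part3 by blast
qed

end
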